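(* Let $w=w_1\cdots w_n$ be a word of distinct positive integers avoiding $31245,32145,31254,32154$. Let $l_1<\dots<l_s$ be the positions of the left-to-right maxima of $w$ and $r_1<\dots<r_t$ the positions of the right-to-left maxima (so $l_1=1$, $l_s=r_1$ is the position of $\max(w)$, $r_t=n$). Assume $s>1$, $t>1$, $l_s>s$, and $w_{l_{s-1}}<w_{r_2}$. Then exactly one of the following holds: (I-1) $l_s=l_{s-1}+1$; (I-2) $l_s=l_{s-1}+2$ and $w_j<w_{l_{s-1}}$ for all $l_s<j<r_2$; (I-3) $l_s=l_{s-1}+2$ and there is an integer $k$ with $l_s<k<r_2$ such that $w_j>w_{l_{s-1}}$ for all $l_s<j\le k$ and $w_j<w_{l_{s-1}}$ for all $k<j<r_2$.
   Context: A word of distinct positive integers avoids a pattern $P$ (a permutation of $[m]$) if no subsequence of length $m$ is order-isomorphic to $P$. A left-to-right (resp. right-to-left) maximum of $w$ is a letter $w_i$ greater than all letters to its left (resp. right). *)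

theory Defs
  imports Main
begin

text \<open>Words are lists of natural numbers; letters are accessed with 1-based positions.\<close>

definition letter :: "nat list \<Rightarrow> nat \<Rightarrow> nat" where
  "letter w i = w ! (i - 1)"

definition contains_pattern :: "nat list \<Rightarrow> nat list \<Rightarrow> bool" where
  "contains_pattern w P \<longleftrightarrow>
     (\<exists>idx :: nat \<Rightarrow> nat.
        (\<forall>a b. a < b \<and> b < length P \<longrightarrow> idx a < idx b) \<and>
        (\<forall>a < length P. idx a < length w) \<and>
        (\<forall>a < length P. \<forall>b < length P. (w ! idx a < w ! idx b \<longleftrightarrow> P ! a < P ! b)))"

definition avoids :: "nat list \<Rightarrow> nat list \<Rightarrow> bool" where
  "avoids w P \<longleftrightarrow> \<not> contains_pattern w P"

definition ltr_max_pos :: "nat list \<Rightarrow> nat list" where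
  "ltr_max_pos w = filter (\<lambda>i. \<forall>j. 1 \<le> j \<and> j < i \<longrightarrow> letter w j < letter w i) [1..<length w + 1]"

definition rtl_max_pos :: "nat list \<Rightarrow> nat list" where
  "rtl_max_pos w = filter (\<lambda>i. \<forall>j. i < j \<and> j \<le> length w \<longrightarrow> letter w j < letter w i) [1..<length w + 1]"

end

theory Submission
  imports Defs
begin


lemma srt_le: "sorted_wrt (<) (xs::nat list) \<Longrightarrow> q \<le> k \<Longrightarrow> k < length xs \<Longrightarrow> xs!q \<le> xs!k"
  by (metis le_eq_less_or_eq less_imp_le sorted_wrt_nth_less)

lemma srt_between: assumes "sorted_wrt (<) (xs::nat list)" "Suc k < length xs" "xs!k < x" "x < xs!Suc k"
  shows "x \<notin> set xs"
proof
  assume "x \<in> set xs"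
  then obtain q where q: "q < length xs" "xs!q = x" by (auto simp: in_set_conv_nth)
  show False
  proof (cases "q \<le> k")
    case True then show ?thesis using srt_le[OF assms(1) True] assms q by auto
  next
    case False then have sk: "Suc k \<le> q" by simp
    show ?thesis using srt_le[OF assms(1) sk q(1)] assms q by auto
  qed
qed

lemma srt_last: assumes "sorted_wrt (<) (xs::nat list)" "x \<in> set xs" shows "x \<le> xs!(length xs - 1)"
proof -
  obtain q where q: "q < length xs" "xs!q = x" using assms(2) by (auto simp: in_set_conv_nth)
  thus ?thesis using srt_le[OF assms(1), of q "length xs - 1"] by auto
qed

lemma srt_first: assumes "sorted_wrt (<) (xs::nat list)" "x \<in> set xs" shows "xs!0 \<le> x"
proof -
  obtain q where q: "q < length xs" "xs!q = x" using assms(2) by (auto simp: in_set_conv_nth)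
  thus ?thesis using srt_le[OF assms(1), of 0 q] by auto
qed

lemma letter_dist: "distinct w \<Longrightarrow> 1 \<le> i \<Longrightarrow> i \<le> length w \<Longrightarrow> 1 \<le> j \<Longrightarrow> j \<le> length w \<Longrightarrow> i \<noteq> j
   \<Longrightarrow> letter w i \<noteq> letter w j"
  unfolding letter_def by (simp add: nth_eq_iff_index_eq)

definition P :: "nat list \<Rightarrow> nat \<Rightarrow> bool" where
  "P w i \<longleftrightarrow> (\<forall>j. 1 \<le> j \<and> j < i \<longrightarrow> letter w j < letter w i)"
definition Q :: "nat list \<Rightarrow> nat \<Rightarrow> bool" where
  "Q w i \<longleftrightarrow> (\<forall>j. i < j \<and> j \<le> length w \<longrightarrow> letter w j < letter w i)"

lemma ltr_below:
  assumes d: "distinct w" and a: "1 \<le> a" "P w a"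
    and nb: "\<forall>i. a<i \<and> i<b \<and> i \<le> length w \<longrightarrow> \<not> P w i"
  shows "a < j \<Longrightarrow> j \<le> length w \<Longrightarrow> j < b \<Longrightarrow> letter w j < letter w a"
proof (induction j rule: less_induct)
  case (less j)
  have "\<not> P w j" using nb less.prems by auto
  then obtain j' where j': "1 \<le> j'" "j' < j" "\<not> letter w j' < letter w j" unfolding P_def by auto
  have "letter w j' \<noteq> letter w j" using letter_dist[OF d j'(1) _ _ less.prems(2)] j' less.prems a by auto
  hence lt: "letter w j < letter w j'" using j' by auto
  consider "j' < a" | "j' = a" | "a < j'" by linarith
  then show ?case
  proof cases
    case 1 then show ?thesis using a(2) j' lt unfolding P_def by (meson order.strict_trans)
  next
    case 2 then show ?thesis using lt by simp
  next
    case 3 then show ?thesis using less.IH[of j'] j' less.prems lt by auto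
  qed
qed

lemma rtl_below:
  assumes d: "distinct w" and c: "c \<le> length w" "Q w c"
    and nb: "\<forall>i. b<i \<and> i<c \<longrightarrow> \<not> Q w i"
  shows "b < j \<Longrightarrow> j < c \<Longrightarrow> letter w j < letter w c"
proof (induction "c - j" arbitrary: j rule: less_induct)
  case (less j)
  have "\<not> Q w j" using nb less.prems by auto
  then obtain j' where j': "j < j'" "j' \<le> length w" "\<not> letter w j' < letter w j" unfolding Q_def by auto
  have "letter w j' \<noteq> letter w j" using letter_dist[OF d, of j' j] j' less.prems c by auto
  hence lt: "letter w j < letter w j'" using j' by auto
  consider "c < j'" | "j' = c" | "j' < c" by linarith
  then show ?case
  proof cases
    case 1 then show ?thesis using c(2) j' lt unfolding Q_def by (meson order.strict_trans)
  next
    case 2 then show ?thesis using lt by simp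
  next
    case 3
    have "c - j' < c - j" using 3 j' by simp
    then show ?thesis using less.hyps[of j'] 3 j' less.prems lt by force
  qed
qed

lemma all5: "(\<forall>a<(5::nat). X a) \<longleftrightarrow> X 0 \<and> X 1 \<and> X 2 \<and> X 3 \<and> X 4"
  by (auto simp: numeral_eq_Suc less_Suc_eq)

lemma pat5:
  assumes "p0 < p1" "p1 < p2" "p2 < p3" "p3 < p4" "p4 < length w"
    and "\<forall>a<5. \<forall>b<5. (w ! ([p0,p1,p2,p3,p4]!a) < w ! ([p0,p1,p2,p3,p4]!b) \<longleftrightarrow> PP ! a < PP ! b)"
    and "length PP = 5"
  shows "contains_pattern w PP"
  unfolding contains_pattern_def
proof (rule exI[of _ "\<lambda>x. [p0,p1,p2,p3,p4]!x"], intro conjI)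
  show "\<forall>a b. a < b \<and> b < length PP \<longrightarrow> [p0, p1, p2, p3, p4] ! a < [p0, p1, p2, p3, p4] ! b"
    using assms(1-4) by (auto simp: assms(7) numeral_eq_Suc less_Suc_eq)
  show "\<forall>a<length PP. [p0, p1, p2, p3, p4] ! a < length w"
    using assms(1-5) by (auto simp: assms(7) numeral_eq_Suc less_Suc_eq)
qed (use assms in auto)

lemma pat_54:
  fixes w :: "nat list"
  assumes "1 \<le> p0" "p0 < p1" "p1 < p2" "p2 < p3" "p3 < p4" "p4 \<le> length w"
    "letter w p1 < letter w p0" "letter w p2 < letter w p0" "letter w p1 \<noteq> letter w p2"
    "letter w p0 < letter w p4" "letter w p4 < letter w p3"
  shows "contains_pattern w [3,1,2,5,4] \<or> contains_pattern w [3,2,1,5,4]"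
proof (cases "letter w p1 < letter w p2")
  case True
  have "contains_pattern w [3,1,2,5,4]"
    apply (rule pat5[of "p0-1" "p1-1" "p2-1" "p3-1" "p4-1"])
    using assms True unfolding letter_def apply (auto simp: all5) by linarith+
  then show ?thesis by simp
next
  case False
  have "contains_pattern w [3,2,1,5,4]"
    apply (rule pat5[of "p0-1" "p1-1" "p2-1" "p3-1" "p4-1"])
    using assms False unfolding letter_def apply (auto simp: all5) by linarith+
  then show ?thesis by simp
qed

lemma pat_45:
  fixes w :: "nat list"
  assumes "1 \<le> p0" "p0 < p1" "p1 < p2" "p2 < p3" "p3 < p4" "p4 \<le> length w"
    "letter w p1 < letter w p0" "letter w p2 < letter w p0" "letter w p1 \<noteq> letter w p2"
    "letter w p0 < letter w p3" "letter w p3 < letter w p4"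
  shows "contains_pattern w [3,1,2,4,5] \<or> contains_pattern w [3,2,1,4,5]"
proof (cases "letter w p1 < letter w p2")
  case True
  have "contains_pattern w [3,1,2,4,5]"
    apply (rule pat5[of "p0-1" "p1-1" "p2-1" "p3-1" "p4-1"])
    using assms True unfolding letter_def apply (auto simp: all5) by linarith+
  then show ?thesis by simp
next
  case False
  have "contains_pattern w [3,2,1,4,5]"
    apply (rule pat5[of "p0-1" "p1-1" "p2-1" "p3-1" "p4-1"])
    using assms False unfolding letter_def apply (auto simp: all5) by linarith+
  then show ?thesis by simp
qed



theorem lemma3p1:
  fixes w :: "nat list"
  defines "n \<equiv> length w"
    and "s \<equiv> length (ltr_max_pos w)"
    and "t \<equiv> length (rtl_max_pos w)"
    and "l \<equiv> \<lambda>k. ltr_max_pos w ! (k - 1)"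
    and "r \<equiv> \<lambda>k. rtl_max_pos w ! (k - 1)"
  assumes dist: "distinct w"
    and pos: "\<forall>x \<in> set w. 0 < x"
    and av1: "avoids w [3,1,2,4,5]"
    and av2: "avoids w [3,2,1,4,5]"
    and av3: "avoids w [3,1,2,5,4]"
    and av4: "avoids w [3,2,1,5,4]"
    and s1: "s > 1" and t1: "t > 1"
    and ls: "l s > s"
    and cmp: "letter w (l (s - 1)) < letter w (r 2)"
  shows
    "let I1 = (l s = l (s - 1) + 1);
         I2 = (l s = l (s - 1) + 2 \<and>
               (\<forall>j. l s < j \<and> j < r 2 \<longrightarrow> letter w j < letter w (l (s - 1))));
         I3 = (l s = l (s - 1) + 2 \<and>
               (\<exists>k::nat. l s < k \<and> k < r 2 \<and>
                  (\<forall>j. l s < j \<and> j \<le> k \<longrightarrow> letter w j > letter w (l (s - 1))) \<and>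
                  (\<forall>j. k < j \<and> j < r 2 \<longrightarrow> letter w j < letter w (l (s - 1)))))
     in (I1 \<and> \<not> I2 \<and> \<not> I3) \<or> (\<not> I1 \<and> I2 \<and> \<not> I3) \<or> (\<not> I1 \<and> \<not> I2 \<and> I3)"
  
proof -
  let ?L = "ltr_max_pos w" and ?R = "rtl_max_pos w"
  have Ldef: "?L = filter (P w) [1..<n+1]" unfolding ltr_max_pos_def P_def[abs_def] n_def by simp
  have Rdef: "?R = filter (Q w) [1..<n+1]" unfolding rtl_max_pos_def Q_def[abs_def] n_def by simp
  have setL: "\<And>i. i \<in> set ?L \<longleftrightarrow> 1 \<le> i \<and> i \<le> n \<and> P w i" unfolding Ldef by auto
  have setR: "\<And>i. i \<in> set ?R \<longleftrightarrow> 1 \<le> i \<and> i \<le> n \<and> Q w i" unfolding Rdef by auto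
  have sL: "sorted_wrt (<) ?L" unfolding Ldef by (rule sorted_wrt_filter[OF sorted_wrt_upt])
  have sR: "sorted_wrt (<) ?R" unfolding Rdef by (rule sorted_wrt_filter[OF sorted_wrt_upt])
  define a where "a = l (s - 1)"
  define m where "m = l s"
  define c where "c = r 2"
  have aL: "a = ?L ! (s - 2)" unfolding a_def l_def using s1 by (simp add: numeral_eq_Suc)
  have mL: "m = ?L ! (s - 1)" unfolding m_def l_def by simp
  have cR: "c = ?R ! 1" unfolding c_def r_def by simp
  have sS: "s - 1 = Suc (s - 2)" using s1 by simp
  have ainL: "a \<in> set ?L" unfolding aL using s1 s_def by simp
  have minL: "m \<in> set ?L" unfolding mL using s1 s_def by simp
  have am: "a < m" unfolding aL mL using sorted_wrt_nth_less[OF sL, of "s-2" "s-1"] s1 s_def by simp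
  have a1: "1 \<le> a" "P w a" using ainL setL by auto
  have mn: "1 \<le> m" "m \<le> n" "P w m" using minL setL by auto
  have noP1: "\<forall>i. a<i \<and> i<m \<and> i \<le> length w \<longrightarrow> \<not> P w i"
  proof (intro allI impI)
    fix i assume i: "a<i \<and> i<m \<and> i \<le> length w"
    have "i \<notin> set ?L" using srt_between[OF sL, of "s-2" i] i aL mL sS s1 s_def by simp
    thus "\<not> P w i" using setL i a1 n_def by auto
  qed
  have noP2: "\<forall>i. m<i \<and> i<n+1 \<and> i \<le> length w \<longrightarrow> \<not> P w i"
  proof (intro allI impI)
    fix i assume i: "m<i \<and> i<n+1 \<and> i \<le> length w"
    have "i \<notin> set ?L" using srt_last[OF sL, of i] i mL s_def by auto
    thus "\<not> P w i" using setL i mn n_def by auto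
  qed
  have below_a: "\<And>j. a < j \<Longrightarrow> j < m \<Longrightarrow> letter w j < letter w a"
    using ltr_below[OF dist a1 noP1] mn n_def by simp
  have Qm: "Q w m" unfolding Q_def
    using ltr_below[OF dist mn(1) mn(3) noP2] n_def by simp
  have Qge: "\<And>p. 1 \<le> p \<Longrightarrow> Q w p \<Longrightarrow> m \<le> p"
  proof (rule ccontr)
    fix p assume p: "1 \<le> p" "Q w p" "\<not> m \<le> p"
    have "letter w m < letter w p" using p mn unfolding Q_def n_def by auto
    moreover have "letter w p < letter w m" using p mn unfolding P_def by auto
    ultimately show False by simp
  qed
  have t0: "0 < length ?R" "1 < length ?R" using t1 t_def by auto
  have R0: "?R ! 0 = m"
  proof -
    have "?R ! 0 \<in> set ?R" using t0 by simp
    hence "m \<le> ?R ! 0" using Qge setR by auto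
    moreover have "?R ! 0 \<le> m" using srt_first[OF sR, of m] setR mn Qm by auto
    ultimately show ?thesis by simp
  qed
  have cinR: "c \<in> set ?R" unfolding cR using t0 by simp
  have cn: "1 \<le> c" "c \<le> n" "Q w c" using cinR setR by auto
  have mc: "m < c" unfolding cR using sorted_wrt_nth_less[OF sR, of 0 1] t0 R0 by simp
  have noQ: "\<forall>i. m<i \<and> i<c \<longrightarrow> \<not> Q w i"
  proof (intro allI impI)
    fix i assume i: "m<i \<and> i<c"
    have "i \<notin> set ?R" using srt_between[OF sR, of 0 i] i R0 cR t0 by simp
    thus "\<not> Q w i" using setR i mn cn by auto
  qed
  have below_c: "\<And>j. m < j \<Longrightarrow> j < c \<Longrightarrow> letter w j < letter w c"
    using rtl_below[OF dist _ cn(3) noQ] cn n_def by simp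
  have cm: "letter w c < letter w m" using Qm mc cn unfolding Q_def n_def by simp
  have ac: "letter w a < letter w c" using cmp unfolding a_def c_def .
  have d: "\<And>i j. 1 \<le> i \<Longrightarrow> i \<le> n \<Longrightarrow> 1 \<le> j \<Longrightarrow> j \<le> n \<Longrightarrow> i \<noteq> j \<Longrightarrow> letter w i \<noteq> letter w j"
    using letter_dist[OF dist] n_def by simp
  have m2: "m \<le> a + 2"
  proof (rule ccontr)
    assume "\<not> m \<le> a + 2"
    hence "contains_pattern w [3,1,2,5,4] \<or> contains_pattern w [3,2,1,5,4]"
      using pat_54[of a "a+1" "a+2" m c w] a1 mc cn n_def below_a d[of "a+1" "a+2"] cm ac
      by auto
    thus False using av3 av4 unfolding avoids_def by auto
  qed
  have eqs: "l s = m" "l (s - 1) = a" "r 2 = c" using a_def m_def c_def by auto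
  show ?thesis
  proof (cases "m = a + 1")
    case True then show ?thesis unfolding Let_def eqs by auto
  next
    case False
    hence ma: "m = a + 2" using m2 am by auto
    have noviol: "\<And>j j'. m < j \<Longrightarrow> j < j' \<Longrightarrow> j' < c \<Longrightarrow> letter w j < letter w a \<Longrightarrow> letter w a < letter w j' \<Longrightarrow> False"
    proof -
      fix j j' assume jj: "m < j" "j < j'" "j' < c" "letter w j < letter w a" "letter w a < letter w j'"
      have "contains_pattern w [3,1,2,4,5] \<or> contains_pattern w [3,2,1,4,5]"
        using pat_45[of a "a+1" j j' c w] a1 jj ma cn n_def below_a[of "a+1"] d[of "a+1" j] below_c[of j'] 
        by auto
      thus False using av1 av2 unfolding avoids_def by auto
    qed
    show ?thesis
    proof (cases "\<forall>j. m < j \<and> j < c \<longrightarrow> letter w j < letter w a")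
      case True
      then show ?thesis unfolding Let_def eqs using ma by (auto dest: order.asym)
    next
      case F2: False
      then obtain j0 where j0: "m < j0" "j0 < c" "\<not> letter w j0 < letter w a" by auto
      have "letter w j0 \<noteq> letter w a" using d[of j0 a] j0 am a1 cn by auto
      hence j0a: "letter w a < letter w j0" using j0 by auto
      define S where "S = {j. m < j \<and> j < c \<and> letter w a < letter w j}"
      define k where "k = Max S"
      have fS: "finite S" unfolding S_def by (rule finite_subset[of _ "{..<c}"]) auto
      have j0S: "j0 \<in> S" unfolding S_def using j0 j0a by auto
      have kS: "k \<in> S" unfolding k_def using fS j0S Max_in by blast
      have kmax: "\<And>j. j \<in> S \<Longrightarrow> j \<le> k" unfolding k_def using fS by simp
      have k1: "m < k" "k < c" "letter w a < letter w k" using kS S_def by auto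
      have k2: "\<forall>j. m < j \<and> j \<le> k \<longrightarrow> letter w a < letter w j"
      proof (intro allI impI)
        fix j assume j: "m < j \<and> j \<le> k"
        show "letter w a < letter w j"
        proof (cases "j = k")
          case True then show ?thesis using k1 by simp
        next
          case False
          have "letter w j \<noteq> letter w a" using d[of j a] j am a1 k1 cn by auto
          thus ?thesis using noviol[of j k] j False k1 by fastforce
        qed
      qed
      have k3: "\<forall>j. k < j \<and> j < c \<longrightarrow> letter w j < letter w a"
      proof (intro allI impI)
        fix j assume j: "k < j \<and> j < c"
        have "letter w j \<noteq> letter w a" using d[of j a] j am a1 k1 cn by auto
        moreover have "j \<notin> S" using kmax j by fastforce
        ultimately show "letter w j < letter w a" using j k1 S_def by auto
      qed
      have "\<not> (\<forall>j. m < j \<and> j < c \<longrightarrow> letter w j < letter w a)" using F2 .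
      then show ?thesis unfolding Let_def eqs using ma k1 k2 k3 by auto
    qed
  qed
qed

end
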